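(* Let $n\ge 2$ and $q\in\{2,3\}$. Then ${\rm SL}(n,q)$ (which equals ${\rm GL}(n,2)$ when $q=2$) is generated by $x_{12}(1)=I+E_{12}$ and the $n\times n$ matrix $w$ with entry $1$ in position $(1,n)$, entry $-1$ in positions $(i+1,i)$ for $1\le i\le n-1$, and $0$ elsewhere.
   Context: $E_{ij}$ denotes the square matrix with $1$ in position $(i,j)$ and $0$ elsewhere; $x_{ij}(\alpha)=I+\alpha E_{ij}$ for $i\ne j$. *)

theory Defs
  imports "Jordan_Normal_Form.Determinant" "Berlekamp_Zassenhaus.Finite_Field"
begin

text \<open>Matrices are 0-indexed in Jordan_Normal_Form: paper position (i,j) is (i-1,j-1).\<close>

definition SL :: "nat \<Rightarrow> ('a::comm_ring_1) mat set" where
  "SL n = {A \<in> carrier_mat n n. det A = 1}"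

inductive_set mat_gen :: "nat \<Rightarrow> ('a::comm_ring_1) mat set \<Rightarrow> 'a mat set"
  for n :: nat and S :: "'a mat set" where
  one: "1\<^sub>m n \<in> mat_gen n S"
| gen: "A \<in> S \<Longrightarrow> A \<in> mat_gen n S"
| inv: "A \<in> S \<Longrightarrow> B \<in> carrier_mat n n \<Longrightarrow> A * B = 1\<^sub>m n \<Longrightarrow> B \<in> mat_gen n S"
| mult: "A \<in> mat_gen n S \<Longrightarrow> B \<in> mat_gen n S \<Longrightarrow> A * B \<in> mat_gen n S"

definition elem_x :: "nat \<Rightarrow> nat \<Rightarrow> nat \<Rightarrow> ('a::comm_ring_1) \<Rightarrow> 'a mat" where
  "elem_x n i j a = mat n n (\<lambda>(k,l). (if k = l then 1 else 0) + (if k = i \<and> l = j then a else 0))"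

definition w_mat :: "nat \<Rightarrow> ('a::comm_ring_1) mat" where
  "w_mat n = mat n n (\<lambda>(k,l). if k = 0 \<and> l = n - 1 then 1 else if k = l + 1 then -1 else 0)"

end

theory Submission
  imports Defs
begin
lemma elem_x_carrier[simp]: "elem_x n i j a \<in> carrier_mat n n"
  by (simp add: elem_x_def)
lemma elem_x_index[simp]: "r < n \<Longrightarrow> c < n \<Longrightarrow> elem_x n i j a $$ (r,c) = (if r = c then 1 else 0) + (if r = i \<and> c = j then a else 0)"
  by (simp add: elem_x_def)
lemma elem_x_dim[simp]: "dim_row (elem_x n i j a) = n" "dim_col (elem_x n i j a) = n"
  by (simp_all add: elem_x_def)
lemma elem_x_mult_left:
  assumes A: "A \<in> carrier_mat n n" and "j < n" "r < n" "c < n"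
  shows "(elem_x n i j a * A) $$ (r,c) = A $$ (r,c) + (if r = i then a * A $$ (j,c) else 0)"
  using assms by (simp add: scalar_prod_def distrib_right sum.distrib if_distrib[of "\<lambda>x. x * _"] cong: if_cong)
lemma elem_x_mult_right:
  assumes A: "A \<in> carrier_mat n n" and "i < n" "r < n" "c < n"
  shows "(A * elem_x n i j a) $$ (r,c) = A $$ (r,c) + (if c = j then A $$ (r,i) * a else 0)"
  using assms by (simp add: scalar_prod_def distrib_left sum.distrib if_distrib[of "\<lambda>x. _ * x"] cong: if_cong)

lemma mult_carrier_simp[simp]: "A \<in> carrier_mat n n \<Longrightarrow> B \<in> carrier_mat n n \<Longrightarrow> A * B \<in> carrier_mat n n" by auto

lemma elem_x_add: assumes "i \<noteq> j" "i < n" "j < n"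
  shows "elem_x n i j a * elem_x n i j b = elem_x n i j (a + b)"
  by (rule eq_matI) (use assms in \<open>auto simp: elem_x_mult_left algebra_simps simp del: index_mult_mat(1)\<close>)

lemma elem_x_zero: "elem_x n i j 0 = 1\<^sub>m n"
  by (rule eq_matI) auto

lemma elem_x_comm: assumes "i \<noteq> j" "j \<noteq> k" "i \<noteq> k" "i < n" "j < n" "k < n"
  shows "elem_x n i j a * (elem_x n j k b * (elem_x n i j (-a) * elem_x n j k (-b))) = elem_x n i k (a*b)"
  by (rule eq_matI) (use assms in \<open>auto simp: elem_x_mult_left algebra_simps simp del: index_mult_mat(1)\<close>)

definition sc :: "nat \<Rightarrow> nat \<Rightarrow> nat" where "sc n i = (if i = n - 1 then 0 else i + 1)"
definition pr :: "nat \<Rightarrow> nat \<Rightarrow> nat" where "pr n i = (if i = 0 then n - 1 else i - 1)"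
definition sg :: "nat \<Rightarrow> 'a::comm_ring_1" where "sg r = (if r = 0 then 1 else -1)"

lemma w_carrier[simp]: "w_mat n \<in> carrier_mat n n" by (simp add: w_mat_def)
lemma w_dim[simp]: "dim_row (w_mat n) = n" "dim_col (w_mat n) = n" by (simp_all add: w_mat_def)
lemma w_index: "n \<ge> 2 \<Longrightarrow> r < n \<Longrightarrow> l < n \<Longrightarrow> w_mat n $$ (r,l) = (if l = pr n r then sg r else 0)"
  by (auto simp: w_mat_def pr_def sg_def)

lemma w_mult_left: assumes "n \<ge> 2" "A \<in> carrier_mat n n" "r < n" "c < n"
  shows "(w_mat n * A) $$ (r,c) = sg r * A $$ (pr n r, c)"
proof -
  have "pr n r < n" using assms by (auto simp: pr_def)
  then show ?thesis using assms
    by (simp add: scalar_prod_def w_index if_distrib[of "\<lambda>x. x * _"] cong: if_cong)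
qed

lemma pr_sc: "i < n \<Longrightarrow> n \<ge> 2 \<Longrightarrow> l < n \<Longrightarrow> (c = pr n l) = (l = sc n c)" if "c < n"
  using that by (auto simp: pr_def sc_def)

lemma w_mult_right: assumes "n \<ge> 2" "A \<in> carrier_mat n n" "r < n" "c < n"
  shows "(A * w_mat n) $$ (r,c) = A $$ (r, sc n c) * sg (sc n c)"
proof -
  have "sc n c < n" using assms by (auto simp: sc_def)
  moreover have "\<And>l. l < n \<Longrightarrow> (c = pr n l) = (l = sc n c)" using assms by (auto simp: pr_def sc_def)
  ultimately show ?thesis using assms
    by (simp add: scalar_prod_def w_index if_distrib[of "\<lambda>x. _ * x"] cong: if_cong)
qed

lemma pr_eq_iff: "n \<ge> 2 \<Longrightarrow> r < n \<Longrightarrow> c < n \<Longrightarrow> (pr n r = c) = (r = sc n c)"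
  by (auto simp: pr_def sc_def)
lemma sc_inj: "n \<ge> 2 \<Longrightarrow> r < n \<Longrightarrow> c < n \<Longrightarrow> (sc n r = sc n c) = (r = c)"
  by (auto simp: sc_def)
lemma pr_inj: "n \<ge> 2 \<Longrightarrow> r < n \<Longrightarrow> c < n \<Longrightarrow> (pr n r = pr n c) = (r = c)"
  by (auto simp: pr_def)
lemma sc_less: "n \<ge> 2 \<Longrightarrow> r < n \<Longrightarrow> sc n r < n" by (auto simp: sc_def)
lemma pr_less: "n \<ge> 2 \<Longrightarrow> r < n \<Longrightarrow> pr n r < n" by (auto simp: pr_def)
lemma sg_sq: "sg r * sg r = (1::'a::comm_ring_1)" by (simp add: sg_def)

lemma w_conj: assumes "n \<ge> 2" "i \<noteq> j" "i < n" "j < n"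
  shows "w_mat n * elem_x n i j a = elem_x n (sc n i) (sc n j) (sg (sc n i) * sg (sc n j) * a) * w_mat n"
proof (rule eq_matI)
  fix r c assume rc: "r < dim_row (elem_x n (sc n i) (sc n j) (sg (sc n i) * sg (sc n j) * a) * w_mat n)"
    "c < dim_col (elem_x n (sc n i) (sc n j) (sg (sc n i) * sg (sc n j) * a) * w_mat n)"
  hence r: "r < n" and c: "c < n" by auto
  have 1: "(w_mat n * elem_x n i j a) $$ (r,c) = sg r * ((if pr n r = c then 1 else 0) + (if pr n r = i \<and> c = j then a else 0))"
    using assms r c by (simp add: w_mult_left pr_less del: index_mult_mat(1))
  have 2: "(elem_x n (sc n i) (sc n j) (sg (sc n i) * sg (sc n j) * a) * w_mat n) $$ (r,c)
     = ((if r = sc n c then 1 else 0) + (if r = sc n i \<and> sc n c = sc n j then sg (sc n i) * sg (sc n j) * a else 0)) * sg (sc n c)"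
    using assms r c by (simp add: w_mult_right sc_less del: index_mult_mat(1))
  show "(w_mat n * elem_x n i j a) $$ (r,c) = (elem_x n (sc n i) (sc n j) (sg (sc n i) * sg (sc n j) * a) * w_mat n) $$ (r,c)"
  proof -
    have e1: "(pr n r = c) = (r = sc n c)" "(pr n r = i) = (r = sc n i)" "(sc n c = sc n j) = (c = j)"
      using assms r c by (simp_all add: pr_eq_iff sc_inj)
    have s: "sg (sc n i) * (sg (sc n j) * (a * sg (sc n j))) = (sg (sc n i) * a :: 'a)"
      by (simp add: sg_def)
    show ?thesis unfolding 1 2 e1
      by (cases "r = sc n c"; cases "r = sc n i \<and> c = j")
        (auto simp: algebra_simps sg_def)
  qed
qed auto

lemma w_wT: assumes "n \<ge> 2" shows "w_mat n * (w_mat n)\<^sup>T = (1\<^sub>m n :: 'a::comm_ring_1 mat)"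
proof (rule eq_matI)
  fix r c assume "r < dim_row (1\<^sub>m n :: 'a mat)" "c < dim_col (1\<^sub>m n :: 'a mat)"
  hence r: "r < n" and c: "c < n" by auto
  have "(w_mat n * (w_mat n)\<^sup>T) $$ (r,c) = sg r * (w_mat n $$ (c, pr n r) :: 'a)"
    using assms r c by (simp add: w_mult_left pr_less del: index_mult_mat(1))
  also have "\<dots> = (if r = c then 1 else 0)"
    using assms r c by (simp add: w_index pr_less pr_inj sg_sq)
  finally show "(w_mat n * (w_mat n)\<^sup>T) $$ (r,c) = (1\<^sub>m n :: 'a mat) $$ (r,c)" using r c by simp
qed auto

lemma gen_carrier: "A \<in> mat_gen n S \<Longrightarrow> S \<subseteq> carrier_mat n n \<Longrightarrow> A \<in> carrier_mat n n"
  by (induction rule: mat_gen.induct) auto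

abbreviation GG :: "nat \<Rightarrow> ('a::comm_ring_1) mat set" where
  "GG n \<equiv> mat_gen n {elem_x n 0 1 1, w_mat n}"

lemma S_carrier: "{elem_x n 0 1 1, w_mat n} \<subseteq> carrier_mat n n" by auto

lemma GG_carrier: "A \<in> GG n \<Longrightarrow> A \<in> carrier_mat n n"
  using gen_carrier S_carrier by blast

lemma wT_in: "n \<ge> 2 \<Longrightarrow> (w_mat n)\<^sup>T \<in> (GG n :: 'a::comm_ring_1 mat set)"
  by (rule mat_gen.inv[of "w_mat n"]) (auto simp: w_wT)

lemma w_in: "w_mat n \<in> GG n" by (rule mat_gen.gen) auto

definition TT :: "nat \<Rightarrow> nat \<Rightarrow> nat \<Rightarrow> 'a::comm_ring_1 itself \<Rightarrow> bool" where
  "TT n i j _ = (\<forall>a::'a. elem_x n i j a \<in> GG n)"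

lemma shift: assumes n: "n \<ge> 2" and ij: "i \<noteq> j" "i < n" "j < n" and T: "TT n i j TYPE('a::comm_ring_1)"
  shows "TT n (sc n i) (sc n j) TYPE('a)"
  unfolding TT_def
proof
  fix b :: 'a
  define a where "a = sg (sc n i) * sg (sc n j) * b"
  have ab: "sg (sc n i) * sg (sc n j) * a = b" unfolding a_def by (simp add: sg_def)
  have "w_mat n * elem_x n i j a * (w_mat n)\<^sup>T = elem_x n (sc n i) (sc n j) b * w_mat n * (w_mat n)\<^sup>T"
    using w_conj[OF n ij, of a] ab by simp
  also have "\<dots> = elem_x n (sc n i) (sc n j) b * (w_mat n * (w_mat n)\<^sup>T)"
    by (rule assoc_mult_mat[of _ n n _ n _ n]) auto
  also have "\<dots> = elem_x n (sc n i) (sc n j) b"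
    using w_wT[OF n, where 'a='a] right_mult_one_mat[of "elem_x n (sc n i) (sc n j) b" n n] by simp
  finally have eq: "elem_x n (sc n i) (sc n j) b = w_mat n * elem_x n i j a * (w_mat n)\<^sup>T" ..
  show "elem_x n (sc n i) (sc n j) b \<in> GG n" unfolding eq
    by (intro mat_gen.mult w_in wT_in[OF n] T[unfolded TT_def, rule_format])
qed

lemma comm: assumes "i \<noteq> j" "j \<noteq> k" "i \<noteq> k" "i < n" "j < n" "k < n"
  and T1: "TT n i j TYPE('a::comm_ring_1)" and T2: "TT n j k TYPE('a)"
  shows "TT n i k TYPE('a)"
  unfolding TT_def
proof
  fix c :: 'a
  have "elem_x n i k c = elem_x n i j c * (elem_x n j k 1 * (elem_x n i j (-c) * elem_x n j k (-1)))"
    using elem_x_comm[OF assms(1-6), of c 1] by simp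
  then show "elem_x n i k c \<in> GG n"
    using T1 T2 unfolding TT_def by (metis mat_gen.mult)
qed

lemma pow_in: assumes "i \<noteq> j" "i < n" "j < n" "elem_x n i j 1 \<in> (GG n :: 'a::comm_ring_1 mat set)"
  shows "elem_x n i j (of_nat k) \<in> (GG n :: 'a mat set)"
proof (induction k)
  case 0 then show ?case by (simp add: elem_x_zero mat_gen.one)
next
  case (Suc k)
  have "elem_x n i j (of_nat (Suc k) :: 'a) = elem_x n i j (of_nat k) * elem_x n i j 1"
    using elem_x_add[OF assms(1-3), of "of_nat k :: 'a" 1] by (simp add: add.commute)
  then show ?case using Suc assms(4) by (metis mat_gen.mult)
qed

lemma TT_01: assumes surj: "\<And>x::'a::comm_ring_1. \<exists>k. x = of_nat k" and n: "n \<ge> 2"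
  shows "TT n 0 1 TYPE('a)"
  unfolding TT_def
proof
  fix a :: 'a
  obtain k where "a = of_nat k" using surj by blast
  have "elem_x n 0 1 1 \<in> (GG n :: 'a mat set)" by (rule mat_gen.gen) simp
  then show "elem_x n 0 1 a \<in> GG n" using pow_in[of 0 1 n k] n \<open>a = of_nat k\<close> by simp
qed

lemma TT_all: assumes n: "n \<ge> 2" and T01: "TT n 0 1 TYPE('a::comm_ring_1)"
  and ij: "i \<noteq> j" "i < n" "j < n"
  shows "TT n i j TYPE('a)"
proof -
  have sup: "TT n k (Suc k) TYPE('a)" if "Suc k < n" for k
    using that
  proof (induction k)
    case 0 then show ?case using T01 by simp
  next
    case (Suc k)
    have "TT n (sc n k) (sc n (Suc k)) TYPE('a)" using Suc n by (intro shift) auto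
    moreover have "sc n k = Suc k" "sc n (Suc k) = Suc (Suc k)" using Suc by (auto simp: sc_def)
    ultimately show ?case by simp
  qed
  have last: "TT n (n - 1) 0 TYPE('a)"
  proof -
    have "TT n (sc n (n-2)) (sc n (n-1)) TYPE('a)"
      using sup[of "n-2"] n by (intro shift) (auto simp: Suc_diff_Suc numeral_2_eq_2)
    moreover have "sc n (n-2) = n - 1" "sc n (n-1) = 0" using n by (auto simp: sc_def)
    ultimately show ?thesis by simp
  qed
  have up: "TT n i' (i' + Suc d) TYPE('a)" if "i' + Suc d < n" for i' d
    using that
  proof (induction d)
    case 0 then show ?case using sup by simp
  next
    case (Suc d)
    show ?case using comm[of i' "i' + Suc d" "i' + Suc (Suc d)" n] Suc sup[of "i' + Suc d"] by simp
  qed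
  have up': "TT n i' j' TYPE('a)" if "i' < j'" "j' < n" for i' j'
    using up[of i' "j' - i' - 1"] that by simp
  have col0: "TT n i' 0 TYPE('a)" if "0 < i'" "i' < n" for i'
  proof (cases "i' = n - 1")
    case True then show ?thesis using last by simp
  next
    case False
    show ?thesis by (rule comm[of i' "n-1" 0 n]) (use that False up'[of i' "n-1"] last in auto)
  qed
  show ?thesis
  proof (cases "i < j")
    case True then show ?thesis using up' ij by simp
  next
    case False
    then have ji: "j < i" using ij by simp
    show ?thesis
    proof (cases "j = 0")
      case True then show ?thesis using col0 ji ij by simp
    next
      case False
      then show ?thesis using comm[of i 0 j n] col0[of i] up'[of 0 j] ij ji by simp
    qed
  qed
qed

lemma det_elem_x: assumes "i \<noteq> j" "i < n" "j < n"
  shows "det (elem_x n i j a) = 1"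
proof -
  have diag: "prod_list (diag_mat (elem_x n i j a)) = 1"
    unfolding prod_list_diag_prod using assms by (intro prod.neutral) auto
  show ?thesis
  proof (cases "i < j")
    case True
    have "upper_triangular (elem_x n i j a)" using True by (auto intro!: upper_triangularI)
    have "det (elem_x n i j a) = prod_list (diag_mat (elem_x n i j a))"
      by (rule det_upper_triangular[OF \<open>upper_triangular _\<close> elem_x_carrier])
    then show ?thesis using diag by simp
  next
    case False
    have "det (elem_x n i j a) = prod_list (diag_mat (elem_x n i j a))"
      by (rule det_lower_triangular[of n]) (use False in auto)
    then show ?thesis using diag by simp
  qed
qed

definition colsid :: "nat \<Rightarrow> nat \<Rightarrow> 'a::comm_ring_1 mat \<Rightarrow> bool" where
  "colsid n k A = (\<forall>i<n. \<forall>c<k. A $$ (i,c) = (if i = c then 1 else 0))"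

lemma colsid_step: assumes A: "A \<in> carrier_mat n n" and "colsid n k A" "k \<le> j" "j < n" "i < n"
  shows "colsid n k (elem_x n i j a * A)"
  using assms unfolding colsid_def by (auto simp: elem_x_mult_left simp del: index_mult_mat(1))

lemma back_in: assumes H: "\<And>i j a. i \<noteq> j \<Longrightarrow> i < n \<Longrightarrow> j < n \<Longrightarrow> elem_x n i j a \<in> (GG n :: 'a::comm_ring_1 mat set)"
  and ij: "i \<noteq> j" "i < n" "j < n" and A: "(A :: 'a mat) \<in> carrier_mat n n" and in1: "elem_x n i j a * A \<in> GG n"
  shows "A \<in> GG n"
proof -
  have "elem_x n i j (-a) * (elem_x n i j a * A) = elem_x n i j (-a) * elem_x n i j a * A"
    by (rule assoc_mult_mat[symmetric, of _ n n _ n _ n]) (use A in auto)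
  also have "\<dots> = A" using elem_x_add[OF ij, of "-a" a] A by (simp add: elem_x_zero)
  finally show ?thesis using mat_gen.mult[OF H[OF ij] in1] by metis
qed

lemma det_colsid_zero: assumes A: "(A :: 'a::comm_ring_1 mat) \<in> carrier_mat n n" and cs: "colsid n k A" and k: "k < n"
  and z: "\<And>r. k \<le> r \<Longrightarrow> r < n \<Longrightarrow> A $$ (r,k) = 0"
  shows "det A = 0"
proof -
  define B where "B = mat n n (\<lambda>(i,j). (if i = j then 1 else 0) - (if j = k \<and> i < k then A $$ (i,k) else 0))"
  have B: "B \<in> carrier_mat n n" unfolding B_def by simp
  have "upper_triangular B" unfolding B_def by (auto intro!: upper_triangularI)
  moreover have "prod_list (diag_mat B) = 1"
    unfolding prod_list_diag_prod B_def by (intro prod.neutral) auto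
  ultimately have dB: "det B = 1" using det_upper_triangular[OF _ B] by simp
  have col: "(A * B) $$ (r,k) = 0" if r: "r < n" for r
  proof -
    have "(A * B) $$ (r,k) = (\<Sum>l\<in>{0..<n}. A $$ (r,l) * B $$ (l,k))"
      using A B r k by (simp add: scalar_prod_def)
    also have "\<dots> = (\<Sum>l\<in>{0..<n}. (if l = k then A $$ (r,l) else 0) - (if l = r \<and> r < k then A $$ (r,k) else 0))"
    proof (rule sum.cong[OF refl])
      fix l assume l: "l \<in> {0..<n}"
      show "A $$ (r,l) * B $$ (l,k) = (if l = k then A $$ (r,l) else 0) - (if l = r \<and> r < k then A $$ (r,k) else 0)"
        using l k r cs unfolding B_def colsid_def by (auto simp: algebra_simps)
    qed
    also have "\<dots> = A $$ (r,k) - (if r < k then A $$ (r,k) else 0)"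
      using r k by (simp add: sum_subtractf)
    also have "\<dots> = 0" using z r by auto
    finally show ?thesis .
  qed
  have "det (A * B) = (\<Sum>i<n. (A * B) $$ (i,k) * cofactor (A * B) i k)"
    by (rule laplace_expansion_column) (use A B k in auto)
  also have "\<dots> = 0" using col by simp
  finally show ?thesis using det_mult[OF A B] dB by simp
qed

lemma det_colsid_last: assumes A: "(A :: 'a::comm_ring_1 mat) \<in> carrier_mat n n" and cs: "colsid n (n-1) A" and n: "n > 0"
  shows "det A = A $$ (n-1, n-1)"
proof -
  have "upper_triangular A" using cs A unfolding colsid_def by (auto intro!: upper_triangularI)
  then have "det A = (\<Prod>i = 0..<n. A $$ (i,i))" using det_upper_triangular[OF _ A] A
    by (simp add: prod_list_diag_prod)
  also have "\<dots> = (\<Prod>i = 0..<n-1. A $$ (i,i)) * A $$ (n-1, n-1)"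
    using n by (metis Suc_pred' prod.atLeast0_lessThan_Suc)
  also have "(\<Prod>i = 0..<n-1. A $$ (i,i)) = 1" using cs n unfolding colsid_def
    by (intro prod.neutral) auto
  finally show ?thesis by simp
qed

lemma det_mult_elem: assumes "i \<noteq> j" "i < n" "j < n" "A \<in> carrier_mat n n"
  shows "det (elem_x n i j a * A) = det A"
  using det_mult[OF elem_x_carrier[of n i j a] assms(4)] det_elem_x[OF assms(1-3), of a] by simp

lemma elim_step:
  fixes k n :: nat
  assumes H: "\<And>i j a. i \<noteq> j \<Longrightarrow> i < n \<Longrightarrow> j < n \<Longrightarrow> elem_x n i j a \<in> (GG n :: 'a::field mat set)"
  and k: "k < n"
  and IH: "\<And>A. (A :: 'a mat) \<in> carrier_mat n n \<Longrightarrow> det A = 1 \<Longrightarrow> colsid n (Suc k) A \<Longrightarrow> A \<in> GG n"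
  shows "\<And>A. (A :: 'a mat) \<in> carrier_mat n n \<Longrightarrow> det A = 1 \<Longrightarrow> colsid n k A \<Longrightarrow> A \<in> GG n"
proof -
  have clear: "\<And>A. (A :: 'a mat) \<in> carrier_mat n n \<Longrightarrow> det A = 1 \<Longrightarrow> colsid n k A \<Longrightarrow> A $$ (k,k) = 1 \<Longrightarrow>
     (\<forall>i. m \<le> i \<longrightarrow> i < n \<longrightarrow> i \<noteq> k \<longrightarrow> A $$ (i,k) = 0) \<Longrightarrow> A \<in> GG n" for m
  proof (induction m)
    case 0
    have "colsid n (Suc k) A" using 0 unfolding colsid_def by (auto simp: less_Suc_eq)
    then show ?case using IH 0 by blast
  next
    case (Suc m A)
    show ?case
    proof (cases "m < n \<and> m \<noteq> k \<and> A $$ (m,k) \<noteq> 0")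
      case False
      then have "\<forall>i. m \<le> i \<longrightarrow> i < n \<longrightarrow> i \<noteq> k \<longrightarrow> A $$ (i,k) = 0"
        using Suc.prems(5) by (metis le_antisym not_less_eq_eq)
      then show ?thesis using Suc by blast
    next
      case True
      define A' where "A' = elem_x n m k (- A $$ (m,k)) * A"
      have A': "A' \<in> carrier_mat n n" unfolding A'_def using Suc.prems by simp
      have e: "A' $$ (i,c) = A $$ (i,c) + (if i = m then - A $$ (m,k) * A $$ (k,c) else 0)" if "i < n" "c < n" for i c
        unfolding A'_def using that k Suc.prems by (simp add: elem_x_mult_left del: index_mult_mat(1))
      have "A' \<in> GG n"
      proof (rule Suc.IH)
        show "det A' = 1" unfolding A'_def using det_mult_elem[of m k n A] True k Suc.prems by simp
        show "colsid n k A'" unfolding A'_def by (rule colsid_step) (use True k Suc.prems in auto)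
        show "A' $$ (k,k) = 1" using e[OF k k] True Suc.prems by simp
        show "\<forall>i. m \<le> i \<longrightarrow> i < n \<longrightarrow> i \<noteq> k \<longrightarrow> A' $$ (i,k) = 0"
        proof (intro allI impI)
          fix i assume i: "m \<le> i" "i < n" "i \<noteq> k"
          show "A' $$ (i,k) = 0"
          proof (cases "i = m")
            case True then show ?thesis using e[OF i(2) k] Suc.prems(4) by simp
          next
            case False
            then have "Suc m \<le> i" using i by simp
            then show ?thesis using e[OF i(2) k] Suc.prems(5) i False by simp
          qed
        qed
      qed fact
      then show ?thesis using back_in[OF H, of m k A] True k Suc.prems unfolding A'_def by auto
    qed
  qed
  have clear': "\<And>A. (A :: 'a mat) \<in> carrier_mat n n \<Longrightarrow> det A = 1 \<Longrightarrow> colsid n k A \<Longrightarrow> A $$ (k,k) = 1 \<Longrightarrow> A \<in> GG n"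
    using clear[of _ n] by auto
  have S1: "A \<in> GG n" if A: "(A :: 'a mat) \<in> carrier_mat n n" "det A = 1" "colsid n k A" and k1: "Suc k < n"
    and nz: "A $$ (Suc k, k) \<noteq> 0" for A
  proof -
    define c where "c = (1 - A $$ (k,k)) / A $$ (Suc k, k)"
    define A' where "A' = elem_x n k (Suc k) c * A"
    have "A' \<in> GG n"
    proof (rule clear')
      show "A' \<in> carrier_mat n n" unfolding A'_def using A by simp
      show "det A' = 1" unfolding A'_def using det_mult_elem[of k "Suc k" n A] k1 A by simp
      show "colsid n k A'" unfolding A'_def by (rule colsid_step) (use k1 A in auto)
      show "A' $$ (k,k) = 1" unfolding A'_def using k1 A nz
        by (simp add: elem_x_mult_left c_def del: index_mult_mat(1))
    qed
    then show ?thesis using back_in[OF H, of k "Suc k" A] k1 A unfolding A'_def by auto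
  qed
  show "A \<in> GG n" if A: "(A :: 'a mat) \<in> carrier_mat n n" "det A = 1" "colsid n k A" for A
  proof (cases "A $$ (k,k) = 1")
    case True then show ?thesis using clear' A by blast
  next
    case False
    show ?thesis
    proof (cases "Suc k < n")
      case False
      then have "k = n - 1" using k by simp
      then have "det A = A $$ (k,k)" using det_colsid_last[of A n] A k by simp
      then show ?thesis using A \<open>A $$ (k,k) \<noteq> 1\<close> by simp
    next
      case k1: True
      show ?thesis
      proof (cases "A $$ (Suc k, k) = 0")
        case False then show ?thesis using S1 A k1 by blast
      next
        case True
        obtain r where r: "k \<le> r" "r < n" "A $$ (r,k) \<noteq> 0"
          using det_colsid_zero[OF A(1) A(3) k] A(2) by force
        then have rk: "r \<noteq> Suc k" using True by auto
        define A' where "A' = elem_x n (Suc k) r 1 * A"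
        have "A' \<in> GG n"
        proof (rule S1)
          show "A' \<in> carrier_mat n n" unfolding A'_def using A by simp
          show "det A' = 1" unfolding A'_def using det_mult_elem[of "Suc k" r n A] k1 A r rk by simp
          show "colsid n k A'" unfolding A'_def by (rule colsid_step) (use k1 A r in auto)
          show "A' $$ (Suc k, k) \<noteq> 0" unfolding A'_def using k1 A r True
            by (simp add: elem_x_mult_left del: index_mult_mat(1))
        qed fact
        then show ?thesis using back_in[OF H, of "Suc k" r A] k1 A r rk unfolding A'_def by auto
      qed
    qed
  qed
qed

lemma SL_sub_GG:
  assumes H: "\<And>i j a. i \<noteq> j \<Longrightarrow> i < n \<Longrightarrow> j < n \<Longrightarrow> elem_x n i j a \<in> (GG n :: 'a::field mat set)"
  and A: "(A :: 'a mat) \<in> carrier_mat n n" and d: "det A = 1"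
  shows "A \<in> GG n"
proof -
  have "\<forall>A. (A :: 'a mat) \<in> carrier_mat n n \<longrightarrow> det A = 1 \<longrightarrow> colsid n (n - d) A \<longrightarrow> A \<in> GG n" for d
  proof (induction d)
    case 0
    show ?case
    proof (intro allI impI)
      fix A :: "'a mat" assume A: "A \<in> carrier_mat n n" and "colsid n (n - 0) A"
      then have "A = 1\<^sub>m n" unfolding colsid_def by (intro eq_matI) auto
      then show "A \<in> GG n" by (simp add: mat_gen.one)
    qed
  next
    case (Suc d)
    show ?case
    proof (cases "d < n")
      case False
      then have "n - Suc d = n - d" by simp
      then show ?thesis using Suc by simp
    next
      case True
      have k: "n - Suc d < n" using True by simp
      have eq: "Suc (n - Suc d) = n - d" using True by simp
      show ?thesis
      proof (intro allI impI)
        fix B :: "'a mat" assume B: "B \<in> carrier_mat n n" "det B = 1" "colsid n (n - Suc d) B"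
        show "B \<in> GG n"
        proof (rule elim_step[OF H k])
          show "\<And>C :: 'a mat. C \<in> carrier_mat n n \<Longrightarrow> det C = 1 \<Longrightarrow> colsid n (Suc (n - Suc d)) C \<Longrightarrow> C \<in> GG n"
            using Suc eq by simp
        qed (use B in auto)
      qed
    qed
  qed
  from this[of n] A d show ?thesis unfolding colsid_def by simp
qed

lemma det_w: assumes n: "n \<ge> 2" shows "det (w_mat n :: 'a::comm_ring_1 mat) = 1"
proof -
  have "det (w_mat n :: 'a mat) = (\<Sum>j<n. w_mat n $$ (0,j) * cofactor (w_mat n) 0 j)"
    by (rule laplace_expansion_row) (use n in auto)
  also have "\<dots> = (\<Sum>j<n. if j = n - 1 then cofactor (w_mat n :: 'a mat) 0 (n-1) else 0)"
    by (rule sum.cong[OF refl]) (use n in \<open>auto simp: w_index pr_def sg_def\<close>)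
  also have "\<dots> = cofactor (w_mat n :: 'a mat) 0 (n-1)" using n by simp
  also have "mat_delete (w_mat n :: 'a mat) 0 (n-1) = (-1) \<cdot>\<^sub>m 1\<^sub>m (n-1)"
    by (rule eq_matI) (use n in \<open>auto simp: mat_delete_def w_index pr_def sg_def\<close>)
  then have "cofactor (w_mat n :: 'a mat) 0 (n-1) = (-1)^(n-1) * ((-1)^(n-1))"
    unfolding cofactor_def by simp
  also have "\<dots> = 1" by (simp add: power_mult_distrib[symmetric])
  finally show ?thesis .
qed

lemma GG_sub_SL: assumes n: "n \<ge> 2" and "A \<in> (GG n :: 'a::comm_ring_1 mat set)"
  shows "A \<in> carrier_mat n n \<and> det A = 1"
  using assms(2)
proof (induction rule: mat_gen.induct)
  case one then show ?case by simp
next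
  case (gen A) then show ?case using det_w[OF n] det_elem_x[of 0 1 n] n by auto
next
  case (inv A B)
  then have "det A = 1" using det_w[OF n] det_elem_x[of 0 1 n] n by auto
  moreover have "det (A * B) = det A * det B" using inv by (intro det_mult) auto
  ultimately show ?case using inv by simp
next
  case (mult A B) then show ?case using det_mult[of A n B] by auto
qed

theorem mainTheorem3:
  fixes n :: nat
  assumes "n \<ge> 2" and "CARD('p::prime_card) \<in> {2, 3}"
  shows "mat_gen n {elem_x n 0 1 (1 :: 'p mod_ring), w_mat n} = (SL n :: 'p mod_ring mat set)"
proof
  show "mat_gen n {elem_x n 0 1 (1 :: 'p mod_ring), w_mat n} \<subseteq> SL n"
    using GG_sub_SL[OF assms(1)] unfolding SL_def by blast
next
  have surj: "\<And>x::'p mod_ring. \<exists>k. x = of_nat k" using surj_of_nat_mod_ring by blast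
  have T01: "TT n 0 1 TYPE('p mod_ring)" by (rule TT_01[OF surj assms(1)])
  have H: "\<And>i j a. i \<noteq> j \<Longrightarrow> i < n \<Longrightarrow> j < n \<Longrightarrow> elem_x n i j a \<in> (GG n :: 'p mod_ring mat set)"
    using TT_all[OF assms(1) T01] unfolding TT_def by blast
  show "SL n \<subseteq> mat_gen n {elem_x n 0 1 (1 :: 'p mod_ring), w_mat n}"
    using SL_sub_GG[OF H] unfolding SL_def by blast
qed
end
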